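(* Suppose $w$ induces the triangulation $Z$ and fix $\epsilon>0$. There are constants $C,a>0$ (depending on $w,\Delta,\epsilon$) such that for all sufficiently small $\delta>0$: if $S\in Z$ and $x\in P_\Sigma$ satisfy $\rho_m(x)>\epsilon$ for all $m\in S$, then $\rho_m(x)\le C\delta^a$ for every $m\in A\setminus S$ such that $S\cup\{m\}$ is not (the vertex set of) a simplex of $Z$.
   Context: Let $M\cong\mathbb{Z}^2$, $\Delta\subset M_{\mathbb{R}}$ a 2-dimensional lattice polygon, $A=\Delta\cap M$, $P_\Sigma$ the projective toric surface of the normal fan of $\Delta$ with torus $(\mathbb{C}^* )^2$, $s_m(x)=x^m$ for $m\in A$. For $w\in\mathbb{Z}^A$, $\delta\in(0,1)$: $\rho_m=\delta^{2w_m}|s_m|^2/\sum_{m'\in A}\delta^{2w_{m'}}|s_{m'}|^2$ (extended continuously to $P_\Sigma$). We say $w$ induces the triangulation $Z$ if $Z$ is a triangulation of $\Delta$ whose vertex set is all of $A$, each triangle containing no lattice points other than its vertices, such that for every simplex $\sigma$ of $Z$ there is an affine $\ell_\sigma$ with $w_m=\ell_\sigma(m)$ for vertices $m$ of $\sigma$ and $w_m>\ell_\sigma(m)$ for all other $m\in A$. Simplices of $Z$ are identified with their vertex sets $S\subset A$. *)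

theory Defs
  imports "HOL-Analysis.Analysis"
begin

definition emb :: "int \<times> int \<Rightarrow> real \<times> real" where
  "emb m = (real_of_int (fst m), real_of_int (snd m))"

definition is_lattice_polygon :: "(real \<times> real) set \<Rightarrow> bool" where
  "is_lattice_polygon \<Delta> \<longleftrightarrow>
     (\<exists>V. finite V \<and> \<Delta> = convex hull (emb ` V)) \<and> interior \<Delta> \<noteq> {}"

definition lattice_pts :: "(real \<times> real) set \<Rightarrow> (int \<times> int) set" where
  "lattice_pts \<Delta> = {m. emb m \<in> \<Delta>}"

text \<open>Z is a triangulation of Delta (as an abstract simplicial complex of vertex sets),
  whose vertex set is all of A, and each triangle contains no lattice points besides its vertices.\<close>
definition is_triangulation :: "(real \<times> real) set \<Rightarrow> (int \<times> int) set set \<Rightarrow> bool" where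
  "is_triangulation \<Delta> Z \<longleftrightarrow>
     Z \<subseteq> Pow (lattice_pts \<Delta>) \<and>
     (\<forall>S\<in>Z. S \<noteq> {} \<and> (\<exists>T\<in>Z. S \<subseteq> T \<and> card T = 3 \<and> \<not> collinear (emb ` T))) \<and>
     (\<forall>T\<in>Z. \<forall>S. S \<noteq> {} \<and> S \<subseteq> T \<longrightarrow> S \<in> Z) \<and>
     (\<forall>m\<in>lattice_pts \<Delta>. {m} \<in> Z) \<and>
     \<Union>{convex hull (emb ` T) | T. T \<in> Z} = \<Delta> \<and>
     (\<forall>S\<in>Z. \<forall>T\<in>Z. convex hull (emb ` S) \<inter> convex hull (emb ` T) = convex hull (emb ` (S \<inter> T))) \<and>
     (\<forall>T\<in>Z. card T = 3 \<longrightarrow> {m. emb m \<in> convex hull (emb ` T)} = T)"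

definition induces :: "(int \<times> int \<Rightarrow> int) \<Rightarrow> (real \<times> real) set \<Rightarrow> (int \<times> int) set set \<Rightarrow> bool" where
  "induces w \<Delta> Z \<longleftrightarrow> is_triangulation \<Delta> Z \<and>
     (\<forall>S\<in>Z. \<exists>c a1 a2 :: real.
        (\<forall>m\<in>S. real_of_int (w m) = c + a1 * real_of_int (fst m) + a2 * real_of_int (snd m)) \<and>
        (\<forall>m\<in>lattice_pts \<Delta> - S. real_of_int (w m) > c + a1 * real_of_int (fst m) + a2 * real_of_int (snd m)))"

text \<open>P_Sigma, realised via its projective embedding by the sections s_m, m in A, as the set of
  homogeneous coordinate vectors (nonzero, supported on A) in the closure of the affine cone over
  the image of the torus.  rho is scale invariant, so it is well defined on these points and is
  the continuous extension of rho from the torus.\<close>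
definition torus_cone :: "(real \<times> real) set \<Rightarrow> (int \<times> int \<Rightarrow> complex) set" where
  "torus_cone \<Delta> = {(\<lambda>m. if m \<in> lattice_pts \<Delta> then t * (fst x) powi (fst m) * (snd x) powi (snd m) else 0)
                     | t x. t \<noteq> 0 \<and> fst x \<noteq> 0 \<and> snd x \<noteq> 0}"

definition PSigma :: "(real \<times> real) set \<Rightarrow> (int \<times> int \<Rightarrow> complex) set" where
  "PSigma \<Delta> = {z. z \<in> closure (torus_cone \<Delta>) \<and> (\<exists>m\<in>lattice_pts \<Delta>. z m \<noteq> 0)}"

definition rho :: "(int \<times> int \<Rightarrow> int) \<Rightarrow> (real \<times> real) set \<Rightarrow> real \<Rightarrow> (int \<times> int \<Rightarrow> complex) \<Rightarrow> int \<times> int \<Rightarrow> real" where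
  "rho w \<Delta> \<delta> z m = \<delta> powr (2 * real_of_int (w m)) * (cmod (z m))\<^sup>2 /
      (\<Sum>m'\<in>lattice_pts \<Delta>. \<delta> powr (2 * real_of_int (w m')) * (cmod (z m'))\<^sup>2)"

end

theory Submission
  imports Defs
begin


lemma affine_comb:
  fixes q :: "'i \<Rightarrow> real \<times> real"
  assumes "finite I" "(\<Sum>i\<in>I. c i) = 1"
  shows "k0 + k1 * fst (\<Sum>i\<in>I. c i *\<^sub>R q i) + k2 * snd (\<Sum>i\<in>I. c i *\<^sub>R q i)
       = (\<Sum>i\<in>I. c i * (k0 + k1 * fst (q i) + k2 * snd (q i)))"
proof -
  have "(\<Sum>i\<in>I. c i * (k0 + k1 * fst (q i) + k2 * snd (q i)))
      = k0 * (\<Sum>i\<in>I. c i) + k1 * (\<Sum>i\<in>I. c i * fst (q i)) + k2 * (\<Sum>i\<in>I. c i * snd (q i))"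
    by (simp add: sum.distrib sum_distrib_left algebra_simps)
  then show ?thesis using assms by (simp add: fst_sum snd_sum)
qed

lemma core:
  fixes Y d :: "int \<times> int \<Rightarrow> real" and S T A :: "(int \<times> int) set"
  assumes finA: "finite A" and SA: "S \<subseteq> A" and m: "m \<in> A" "m \<notin> S" and TA: "T \<subseteq> A"
    and pT: "(\<Sum>x\<in>insert m S. (1 / real (card (insert m S))) *\<^sub>R emb x) \<in> convex hull (emb ` T)"
    and Yle: "\<And>n. n \<in> A \<Longrightarrow> Y n \<le> lnD"
    and Ygt: "\<And>s. s \<in> S \<Longrightarrow> Y s \<ge> lnD - K"
    and Yd: "\<And>n. n \<in> A \<Longrightarrow> Y n = k0 + k1 * fst (emb n) + k2 * snd (emb n) - 2 * L * d n"
    and d0: "\<And>n. n \<in> A \<Longrightarrow> d n \<ge> 0" and dT: "\<And>t. t \<in> T \<Longrightarrow> d t = 0"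
    and xz: "xz \<in> insert m S" "d xz \<ge> dm" and L: "L > 0"
  shows "Y m \<le> lnD + real (card S) * K - 2 * L * dm"
proof -
  define H where "H p = k0 + k1 * fst p + k2 * snd p" for p :: "real \<times> real"
  define X where "X = insert m S"
  define n where "n = card X"
  define p where "p = (\<Sum>x\<in>X. (1 / real n) *\<^sub>R emb x)"
  have finS: "finite S" using finA SA finite_subset by blast
  have finX: "finite X" using finS X_def by simp
  have XA: "X \<subseteq> A" using SA m X_def by auto
  have nS: "n = card S + 1" using m finS by (simp add: n_def X_def)
  have finT: "finite T" using finA TA finite_subset by blast
  have "p \<in> convex hull (emb ` T)" using pT by (simp add: p_def X_def n_def)
  then obtain u where u: "\<forall>y\<in>emb ` T. 0 \<le> u y" "sum u (emb ` T) = 1"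
      "(\<Sum>y\<in>emb ` T. u y *\<^sub>R y) = p"
    using convex_hull_finite[of "emb ` T"] finT by auto
  have "H p = (\<Sum>y\<in>emb ` T. u y * H y)"
    using affine_comb[of "emb ` T" u k0 k1 "\<lambda>y. y" k2] u finT by (simp add: H_def)
  also have "\<dots> \<le> (\<Sum>y\<in>emb ` T. u y * lnD)"
  proof (rule sum_mono)
    fix y assume "y \<in> emb ` T"
    then obtain t where t: "t \<in> T" "y = emb t" by auto
    have "H y = Y t" using Yd[of t] dT[OF t(1)] t TA by (auto simp: H_def)
    also have "\<dots> \<le> lnD" using Yle[of t] t TA by blast
    moreover have "u y \<ge> 0" using u(1) \<open>y \<in> emb ` T\<close> by blast
    ultimately show "u y * H y \<le> u y * lnD" by (simp add: mult_left_mono)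
  qed
  also have "\<dots> = lnD" using u(2) by (simp add: sum_distrib_right[symmetric])
  finally have Hp1: "H p \<le> lnD" .
  have n0: "n > 0" using nS by simp
  have "H p = (\<Sum>x\<in>X. (1 / real n) * H (emb x))"
    using affine_comb[of X "\<lambda>_. 1 / real n" k0 k1 emb k2] finX n0
    by (simp add: H_def p_def n_def X_def)
  also have "\<dots> = (1 / real n) * (\<Sum>x\<in>X. H (emb x))" by (simp add: sum_distrib_left)
  finally have "H p * real n = (\<Sum>x\<in>X. H (emb x))" using n0 by (simp add: field_simps)
  then have "(\<Sum>x\<in>X. H (emb x)) \<le> real n * lnD" using Hp1 n0
    by (metis mult.commute mult_right_mono of_nat_0_le_iff)
  moreover have "(\<Sum>x\<in>X. H (emb x)) = (\<Sum>x\<in>X. Y x) + 2 * L * (\<Sum>x\<in>X. d x)"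
  proof -
    have "(\<Sum>x\<in>X. H (emb x)) = (\<Sum>x\<in>X. Y x + 2 * L * d x)"
      by (rule sum.cong) (use XA Yd in \<open>auto simp: H_def\<close>)
    then show ?thesis by (simp add: sum.distrib sum_distrib_left)
  qed
  moreover have "(\<Sum>x\<in>X. d x) \<ge> dm"
  proof -
    have "d xz \<le> (\<Sum>x\<in>X. d x)"
      by (rule member_le_sum) (use xz XA d0 finX X_def in auto)
    then show ?thesis using xz by simp
  qed
  moreover have "(\<Sum>x\<in>X. Y x) = Y m + (\<Sum>x\<in>S. Y x)" using m finS X_def by simp
  moreover have "(\<Sum>x\<in>S. Y x) \<ge> real (card S) * (lnD - K)"
    using sum_mono[of S "\<lambda>_. lnD - K" Y] Ygt by simp
  ultimately have "Y m + real (card S) * (lnD - K) + 2 * L * dm \<le> real n * lnD"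
    using L by (smt (verit, ccfv_SIG) mult_left_mono)
  then show ?thesis using nS by (simp add: algebra_simps)
qed


lemma cont_N: "continuous_on UNIV (\<lambda>z::int\<times>int\<Rightarrow>complex. \<delta> powr (2 * real_of_int (w m)) * (cmod (z m))\<^sup>2)"
  by (intro continuous_intros continuous_on_compose2[OF continuous_on_product_coordinates]) auto

lemma cont_D: "continuous_on UNIV (\<lambda>z::int\<times>int\<Rightarrow>complex. \<Sum>m'\<in>B. \<delta> powr (2 * real_of_int (w m')) * (cmod (z m'))\<^sup>2)"
  by (intro continuous_on_sum cont_N)

lemma powi_exp: "r > 0 \<Longrightarrow> (r::real) powi k = exp (real_of_int k * ln r)"
  using powr_real_of_int'[of r k] by (simp add: powr_def)



theorem mainTheorem5:
  fixes \<Delta> :: "(real \<times> real) set" and w :: "int \<times> int \<Rightarrow> int"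
    and Z :: "(int \<times> int) set set" and \<epsilon> :: real
  assumes "is_lattice_polygon \<Delta>"
    and "induces w \<Delta> Z"
    and "\<epsilon> > 0"
  shows "\<exists>C a \<delta>0. C > 0 \<and> a > 0 \<and> \<delta>0 > 0 \<and>
    (\<forall>\<delta>. 0 < \<delta> \<and> \<delta> < 1 \<and> \<delta> < \<delta>0 \<longrightarrow>
      (\<forall>S\<in>Z. \<forall>z\<in>PSigma \<Delta>.
         (\<forall>m\<in>S. rho w \<Delta> \<delta> z m > \<epsilon>) \<longrightarrow>
         (\<forall>m\<in>lattice_pts \<Delta> - S. insert m S \<notin> Z \<longrightarrow> rho w \<Delta> \<delta> z m \<le> C * \<delta> powr a)))"
proof -
  define A where "A = lattice_pts \<Delta>"
  have tri: "is_triangulation \<Delta> Z" and ell: "\<forall>S\<in>Z. \<exists>c a1 a2 :: real.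
        (\<forall>m\<in>S. real_of_int (w m) = c + a1 * real_of_int (fst m) + a2 * real_of_int (snd m)) \<and>
        (\<forall>m\<in>lattice_pts \<Delta> - S. real_of_int (w m) > c + a1 * real_of_int (fst m) + a2 * real_of_int (snd m))"
    using assms(2) by (auto simp: induces_def)
  have ZA: "Z \<subseteq> Pow A" and Zne: "\<And>S. S \<in> Z \<Longrightarrow> S \<noteq> {}"
    and Zsub: "\<And>T S. T \<in> Z \<Longrightarrow> S \<noteq> {} \<Longrightarrow> S \<subseteq> T \<Longrightarrow> S \<in> Z"
    and cover: "\<Union>{convex hull (emb ` T) | T. T \<in> Z} = \<Delta>"
  proof -
    note c = tri[unfolded is_triangulation_def]
    show "Z \<subseteq> Pow A" using conjunct1[OF c] by (simp add: A_def)
    show "\<And>S. S \<in> Z \<Longrightarrow> S \<noteq> {}" using conjunct1[OF conjunct2[OF c]] by simp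
    show "\<And>T S. T \<in> Z \<Longrightarrow> S \<noteq> {} \<Longrightarrow> S \<subseteq> T \<Longrightarrow> S \<in> Z"
      using conjunct1[OF conjunct2[OF conjunct2[OF c]]] by blast
    show "\<Union>{convex hull (emb ` T) | T. T \<in> Z} = \<Delta>"
      using conjunct1[OF conjunct2[OF conjunct2[OF conjunct2[OF conjunct2[OF c]]]]] by simp
  qed
  have cvx: "convex \<Delta>" using assms(1) unfolding is_lattice_polygon_def by auto
  show ?thesis
  proof (cases "finite A")
    case False
    show ?thesis
    proof (intro exI[of _ 1] conjI allI impI ballI)
      fix \<delta> S z m assume S: "S \<in> Z" and h: "\<forall>m\<in>S. \<epsilon> < rho w \<Delta> \<delta> z m"
      obtain s where "s \<in> S" using Zne[OF S] by auto
      then have "\<epsilon> < rho w \<Delta> \<delta> z s" using h by auto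
      moreover have "rho w \<Delta> \<delta> z s = 0" using False by (simp add: rho_def A_def)
      ultimately show "rho w \<Delta> \<delta> z m \<le> 1 * \<delta> powr 1" using assms(3) by simp
    qed auto
  next
    case finA: True
    obtain f where f: "\<forall>S\<in>Z. 
        (\<forall>m\<in>S. real_of_int (w m) = fst (f S) + fst (snd (f S)) * real_of_int (fst m) + snd (snd (f S)) * real_of_int (snd m)) \<and>
        (\<forall>m\<in>A - S. real_of_int (w m) > fst (f S) + fst (snd (f S)) * real_of_int (fst m) + snd (snd (f S)) * real_of_int (snd m))"
    proof -
      define P where "P S q \<longleftrightarrow> (\<forall>m\<in>S. real_of_int (w m) = fst q + fst (snd q) * real_of_int (fst m) + snd (snd q) * real_of_int (snd m)) \<and>
        (\<forall>m\<in>A - S. real_of_int (w m) > fst q + fst (snd q) * real_of_int (fst m) + snd (snd q) * real_of_int (snd m))" for S q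
      have "P S (SOME q. P S q)" if "S \<in> Z" for S
      proof -
        from bspec[OF ell that] obtain c a1 a2 where "P S (c, a1, a2)" unfolding P_def A_def by auto
        then show ?thesis by (rule someI)
      qed
      then show ?thesis using that[of "\<lambda>S. SOME q. P S q"] unfolding P_def by blast
    qed
    define d where "d T m = real_of_int (w m) - (fst (f T) + fst (snd (f T)) * real_of_int (fst m) + snd (snd (f T)) * real_of_int (snd m))" for T m
    define DS where "DS = (\<lambda>(T,x). d T x) ` (SIGMA T:Z. A - T)"
    have finZ: "finite Z" using ZA finA by (meson finite_Pow_iff finite_subset)
    have finDS: "finite DS" unfolding DS_def using finZ finA by auto
    define dm where "dm = Min (insert 1 DS)"
    have dmpos: "dm > 0" unfolding dm_def using finDS f
      by (subst Min_gr_iff) (auto simp: DS_def d_def)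
    have dmle: "dm \<le> d T x" if "T \<in> Z" "x \<in> A - T" for T x
      unfolding dm_def using finDS that by (intro Min_le) (auto simp: DS_def)
    have d0T: "d T t = 0" if "T \<in> Z" "t \<in> T" for T t using f that by (simp add: d_def)
    have d0: "d T t \<ge> 0" if "T \<in> Z" "t \<in> A" for T t
      using f that unfolding d_def by (cases "t \<in> T") force+
    define K where "K = \<bar>ln \<epsilon>\<bar>"
    define C where "C = exp (real (card A) * K)"
    have Cpos: "C > 0" and apos: "2 * dm > 0" using dmpos by (auto simp: C_def)
    have key: "rho w \<Delta> \<delta> z m \<le> C * \<delta> powr (2 * dm)"
      if \<delta>: "0 < \<delta>" "\<delta> < 1" and S: "S \<in> Z" and z: "z \<in> PSigma \<Delta>"
        and h: "\<forall>m\<in>S. \<epsilon> < rho w \<Delta> \<delta> z m" and mA: "m \<in> lattice_pts \<Delta> - S" and mZ: "insert m S \<notin> Z"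
      for \<delta> S z m
    proof -
      define N where "N z m = \<delta> powr (2 * real_of_int (w m)) * (cmod (z m))\<^sup>2" for z :: "int\<times>int\<Rightarrow>complex" and m
      define D where "D z = (\<Sum>m'\<in>A. N z m')" for z
      have rho_eq: "rho w \<Delta> \<delta> z' m' = N z' m' / D z'" for z' m'
        by (simp add: rho_def N_def D_def A_def)
      have SA: "S \<subseteq> A" using S ZA by auto
      have m: "m \<in> A" "m \<notin> S" using mA A_def by auto
      show "rho w \<Delta> \<delta> z m \<le> C * \<delta> powr (2 * dm)"
      proof (rule ccontr)
        assume neg: "\<not> ?thesis"
        define U where "U = {z. 0 < D z} \<inter> (\<Inter>s\<in>S. {z. \<epsilon> * D z < N z s}) \<inter> {z. C * \<delta> powr (2 * dm) * D z < N z m}"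
        have cD: "continuous_on UNIV D" unfolding D_def N_def by (rule cont_D)
        have cN: "continuous_on UNIV (\<lambda>z. N z s)" for s unfolding N_def by (rule cont_N)
        have finS: "finite S" using SA finA by (rule finite_subset)
        have openU: "open U" unfolding U_def
          by (intro open_Int open_INT finS ballI open_Collect_less continuous_on_mult continuous_on_const cD cN)
        have Dpos: "D z > 0"
        proof -
          from z obtain m0 where "m0 \<in> A" "z m0 \<noteq> 0" by (auto simp: PSigma_def A_def)
          then show ?thesis unfolding D_def using finA
            by (intro sum_pos2[where i=m0]) (use \<delta> in \<open>auto simp: N_def\<close>)
        qed
        have "z \<in> U"
        proof -
          have "\<epsilon> * D z < N z s" if "s \<in> S" for s
            using h that Dpos by (simp add: rho_eq pos_less_divide_eq)
          moreover have "C * \<delta> powr (2 * dm) * D z < N z m"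
            using neg Dpos by (simp add: rho_eq not_le pos_less_divide_eq)
          ultimately show ?thesis using Dpos by (simp add: U_def)
        qed
        moreover have "z \<in> closure (torus_cone \<Delta>)" using z by (simp add: PSigma_def)
        ultimately have "U \<inter> torus_cone \<Delta> \<noteq> {}" using openU open_Int_closure_eq_empty by blast
        then obtain z' where zU: "z' \<in> U" and zt: "z' \<in> torus_cone \<Delta>" by blast
        from zt obtain t x where tx: "t \<noteq> 0" "fst x \<noteq> 0" "snd x \<noteq> 0"
          and z'def: "z' = (\<lambda>m. if m \<in> A then t * (fst x) powi (fst m) * (snd x) powi (snd m) else 0)"
          by (auto simp: torus_cone_def A_def)
        define r0 where "r0 = cmod t"
        define r1 where "r1 = cmod (fst x)"
        define r2 where "r2 = cmod (snd x)"
        have rpos: "r0 > 0" "r1 > 0" "r2 > 0" using tx by (auto simp: r0_def r1_def r2_def)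
        define Y where "Y n = 2 * real_of_int (w n) * ln \<delta> + 2 * ln r0 + 2 * real_of_int (fst n) * ln r1 + 2 * real_of_int (snd n) * ln r2" for n
        have NY: "N z' n = exp (Y n)" if "n \<in> A" for n
        proof -
          have "cmod (z' n) = r0 * r1 powi (fst n) * r2 powi (snd n)"
            using that by (simp add: z'def norm_mult norm_power_int r0_def r1_def r2_def)
          also have "\<dots> = exp (ln r0 + real_of_int (fst n) * ln r1 + real_of_int (snd n) * ln r2)"
            using rpos by (simp add: powi_exp exp_add)
          finally have "(cmod (z' n))\<^sup>2 = exp (2 * (ln r0 + real_of_int (fst n) * ln r1 + real_of_int (snd n) * ln r2))"
            by (simp add: power2_eq_square exp_add[symmetric])
          moreover have "\<delta> powr (2 * real_of_int (w n)) = exp (2 * real_of_int (w n) * ln \<delta>)"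
            using \<delta> by (simp add: powr_def)
          ultimately show ?thesis by (simp add: N_def Y_def exp_add[symmetric] algebra_simps)
        qed
        have Dz': "D z' > 0" and hS: "\<And>s. s \<in> S \<Longrightarrow> \<epsilon> * D z' < N z' s"
          and hm: "C * \<delta> powr (2 * dm) * D z' < N z' m" using zU by (auto simp: U_def)
        have NleD: "N z' n \<le> D z'" if "n \<in> A" for n
          unfolding D_def using finA that by (intro member_le_sum) (auto simp: N_def)
        define X where "X = insert m S"
        define p where "p = (\<Sum>x\<in>X. (1 / real (card X)) *\<^sub>R emb x)"
        have finX: "finite X" using finA SA m by (auto simp: X_def intro: finite_subset)
        have "p \<in> \<Delta>" unfolding p_def
        proof (rule convex_sum[OF finX cvx])
          show "(\<Sum>i\<in>X. 1 / real (card X)) = 1" using finX by (simp add: X_def)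
          show "\<And>i. i \<in> X \<Longrightarrow> emb i \<in> \<Delta>" using SA m by (auto simp: X_def A_def lattice_pts_def)
        qed auto
        then obtain T where T: "T \<in> Z" "p \<in> convex hull (emb ` T)" using cover by blast
        have TA: "T \<subseteq> A" using T ZA by auto
        have "\<not> X \<subseteq> T" using Zsub[OF T(1)] mZ by (auto simp: X_def)
        then obtain x0 where x0: "x0 \<in> X" "x0 \<notin> T" by auto
        have x0A: "x0 \<in> A" using x0 SA m by (auto simp: X_def)
        define L where "L = - ln \<delta>"
        have Lpos: "L > 0" using \<delta> by (simp add: L_def)
        have "Y m \<le> ln (D z') + real (card S) * K - 2 * L * dm"
        proof (rule core[OF finA SA m TA, where d = "d T" and xz = x0])
          show "(\<Sum>x\<in>insert m S. (1 / real (card (insert m S))) *\<^sub>R emb x) \<in> convex hull emb ` T"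
            using T p_def X_def by simp
          show "Y n \<le> ln (D z')" if "n \<in> A" for n
            using NleD[OF that] NY[OF that] Dz' by (metis ln_exp ln_le_cancel_iff exp_gt_zero)
          show "Y s \<ge> ln (D z') - K" if "s \<in> S" for s
          proof -
            have "\<epsilon> * D z' < exp (Y s)" using hS[OF that] NY[of s] that SA by auto
            then have "ln (\<epsilon> * D z') < Y s" using assms(3) Dz'
              by (metis ln_exp ln_less_cancel_iff exp_gt_zero mult_pos_pos)
            then show ?thesis using assms(3) Dz' by (simp add: ln_mult K_def)
          qed
          show "Y n = (2 * ln r0 + 2 * ln \<delta> * fst (f T)) + (2 * ln r1 + 2 * ln \<delta> * fst (snd (f T))) * fst (emb n)
               + (2 * ln r2 + 2 * ln \<delta> * snd (snd (f T))) * snd (emb n) - 2 * L * d T n" for n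
            by (simp add: Y_def emb_def L_def d_def algebra_simps)
          show "\<And>n. n \<in> A \<Longrightarrow> 0 \<le> d T n" using d0 T by auto
          show "\<And>t. t \<in> T \<Longrightarrow> d T t = 0" using d0T T by auto
          show "x0 \<in> insert m S" using x0 X_def by simp
          show "d T x0 \<ge> dm" using dmle T x0 x0A by auto
        qed (use Lpos in auto)
        then have "N z' m \<le> exp (ln (D z') + real (card S) * K - 2 * L * dm)"
          using NY m by simp
        also have "\<dots> = D z' * exp (real (card S) * K) * \<delta> powr (2 * dm)"
          using Dz' \<delta> by (simp add: exp_add exp_diff powr_def L_def algebra_simps exp_minus)
        also have "\<dots> \<le> D z' * C * \<delta> powr (2 * dm)"
        proof -
          have "card S \<le> card A" using SA finA by (simp add: card_mono)
          then have "exp (real (card S) * K) \<le> C" unfolding C_def K_def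
            by (intro exp_le_cancel_iff[THEN iffD2] mult_right_mono) auto
          then show ?thesis using Dz' by (intro mult_right_mono mult_left_mono) auto
        qed
        finally show False using hm by (simp add: algebra_simps)
      qed
    qed
    show ?thesis
      apply (rule exI[of _ C], rule exI[of _ "2 * dm"], rule exI[of _ 1])
      apply (intro conjI Cpos apos zero_less_one allI impI ballI)
      apply (elim conjE)
      apply (rule key)
            apply assumption+
      done
  qed
qed

end
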